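(* Fix $q\in(0,1)$. For all $i_1,i_2,j_1,j_2\in\mathbb{Z}_{\ge0}$, as rational functions of $(s_1,s_2)$, $$R_{\frac{s_2}{s_1},s_1,s_2}(i_1,i_2;j_1,j_2)=\mathbf{1}_{i_1+j_2=i_2+j_1}\cdot\mathbf{1}_{j_2\le j_1}\cdot\varphi_{q,s_2^2/s_1^2,\,s_2^2}(j_2\mid j_1).$$
   Context: $q$-Pochhammer symbols: $(a;q)_k=\prod_{i=0}^{k-1}(1-aq^i)$ for $k\ge1$, $(a;q)_0=1$, and for $k\le-1$, $(a;q)_k=1/(a/q;1/q)_{-k}$. The regularized terminating series is ${}_{r+1}\bar\phi_r\bigl(q^{-n};a_1,\dots,a_r;b_1,\dots,b_r\mid q,z\bigr)=\sum_{k=0}^{n}\frac{z^k(q^{-n};q)_k}{(q;q)_k}\prod_{i=1}^r(a_i;q)_k(b_iq^k;q)_{n-k}$. The cross vertex weights are $$R_{z,s_1,s_2}(i_1,i_2;j_1,j_2)=\mathbf{1}_{j_1+i_2=i_1+j_2}\,\frac{(-s_1z)^{j_1}q^{\frac12 j_1(j_1+2i_2-1)}s_2^{\,i_2+j_2-i_1}(zs_1s_2^{-1};q)_{j_2-j_1}}{(q;q)_{i_1}(zs_1s_2;q)_{i_1+j_2}(s_1^{-2}q^{1-i_2};q)_{i_2-j_2}}\,{}_4\bar\phi_3\!\left(\begin{matrix}q^{-i_1};q^{-j_1},zs_1^{-1}s_2,qz^{-1}s_1^{-1}s_2\\ s_2^2,q^{1+j_2-j_1},s_1^{-2}q^{1-i_1-j_2}\end{matrix}\Big|q,q\right).$$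 The $q$-beta-binomial weights are, for $m\in\mathbb{Z}_{\ge0}$ and $0\le j\le m$, $\varphi_{q,\mu,\nu}(j\mid m)=\mu^j\frac{(\nu/\mu;q)_j(\mu;q)_{m-j}}{(\nu;q)_m}\frac{(q;q)_m}{(q;q)_j(q;q)_{m-j}}$ (where $\mu^j(\nu/\mu;q)_j$ means $\prod_{i=0}^{j-1}(\mu-\nu q^i)$), and $\varphi_{q,\mu,\nu}(j\mid m)=0$ for $j>m$. *)

theory Defs
  imports Complex_Main
begin

definition qpoch :: "complex \<Rightarrow> complex \<Rightarrow> int \<Rightarrow> complex" where
  "qpoch a q k =
     (if 0 \<le> k then (\<Prod>i<nat k. (1 - a * q ^ i))
      else 1 / (\<Prod>i<nat (- k). (1 - (a / q) * (1 / q) ^ i)))"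

text \<open>Regularized terminating series
  {}_{r+1}\bar\phi_r(q^{-n}; a_1..a_r; b_1..b_r | q, z); the lists as, bs have length r.\<close>
definition phibar :: "nat \<Rightarrow> complex list \<Rightarrow> complex list \<Rightarrow> complex \<Rightarrow> complex \<Rightarrow> complex" where
  "phibar n as bs q z =
     (\<Sum>k=0..n. z ^ k * qpoch (q powi (- int n)) q (int k) / qpoch q q (int k) *
        (\<Prod>ab\<leftarrow>zip as bs. qpoch (fst ab) q (int k) * qpoch (snd ab * q ^ k) q (int n - int k)))"

definition Rw :: "real \<Rightarrow> complex \<Rightarrow> complex \<Rightarrow> complex \<Rightarrow> nat \<Rightarrow> nat \<Rightarrow> nat \<Rightarrow> nat \<Rightarrow> complex" where
  "Rw q z s1 s2 i1 i2 j1 j2 =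
     (let Q = complex_of_real q in
      (if j1 + i2 = i1 + j2 then 1 else 0) *
      ((- s1 * z) ^ j1 * complex_of_real (q powr (real j1 * (real j1 + 2 * real i2 - 1) / 2))
        * s2 powi (int i2 + int j2 - int i1) * qpoch (z * s1 / s2) Q (int j2 - int j1)
       / (qpoch Q Q (int i1) * qpoch (z * s1 * s2) Q (int (i1 + j2))
          * qpoch (inverse (s1 ^ 2) * Q powi (1 - int i2)) Q (int i2 - int j2)))
      * phibar i1
          [Q powi (- int j1), z * inverse s1 * s2, Q * inverse z * inverse s1 * s2]
          [s2 ^ 2, Q powi (1 + int j2 - int j1), inverse (s1 ^ 2) * Q powi (1 - int i1 - int j2)]
          Q Q)"

text \<open>q-beta-binomial weight phi_{q,mu,nu}(j | m); mu^j (nu/mu;q)_j is the product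
  \<Prod>_{i<j} (mu - nu q^i).\<close>
definition qbb :: "real \<Rightarrow> complex \<Rightarrow> complex \<Rightarrow> nat \<Rightarrow> nat \<Rightarrow> complex" where
  "qbb q mu nu j m =
     (let Q = complex_of_real q in
      if j \<le> m then
        (\<Prod>i<j. (mu - nu * Q ^ i)) * qpoch mu Q (int (m - j)) / qpoch nu Q (int m)
        * (qpoch Q Q (int m) / (qpoch Q Q (int j) * qpoch Q Q (int (m - j))))
      else 0)"

end

theory Submission
  imports Defs
begin

definition qp :: "complex \<Rightarrow> complex \<Rightarrow> nat \<Rightarrow> complex" where
  "qp a q n = (\<Prod>i<n. 1 - a * q ^ i)"
definition pr :: "complex \<Rightarrow> complex \<Rightarrow> nat \<Rightarrow> nat \<Rightarrow> complex" where
  "pr c q m n = (\<Prod>i\<in>{m..<n}. 1 - c * q ^ i)"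

lemma qp_0[simp]: "qp a q 0 = 1" by (simp add: qp_def)
lemma qp_Suc: "qp a q (Suc k) = qp a q k * (1 - a * q ^ k)"
  by (simp add: qp_def)
lemma qp_Suc_shift: "qp a q (Suc k) = (1 - a) * qp (a * q) q k"
  unfolding qp_def prod.lessThan_Suc_shift by (simp add: mult.assoc)
lemma pr_empty[simp]: "n \<le> m \<Longrightarrow> pr c q m n = 1" by (simp add: pr_def)
lemma pr_lo: "m < n \<Longrightarrow> pr c q m n = (1 - c * q ^ m) * pr c q (Suc m) n"
  unfolding pr_def by (simp add: prod.atLeast_Suc_lessThan)
lemma pr_hi: "m \<le> n \<Longrightarrow> pr c q m (Suc n) = pr c q m n * (1 - c * q ^ n)"
  unfolding pr_def by (simp add: prod.atLeastLessThan_Suc)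
lemma pr_shift: "q \<noteq> 0 \<Longrightarrow> pr (c / q) q (Suc m) (Suc n) = pr c q m n"
  unfolding pr_def
  unfolding prod.shift_bounds_Suc_ivl by (rule prod.cong) (simp_all add: field_simps)

definition DD :: "complex \<Rightarrow> complex \<Rightarrow> complex \<Rightarrow> complex \<Rightarrow> nat \<Rightarrow> complex" where
  "DD q A B C N = q * A * B * inverse (q ^ N) / C"

definition TT :: "complex \<Rightarrow> complex \<Rightarrow> complex \<Rightarrow> complex \<Rightarrow> nat \<Rightarrow> nat \<Rightarrow> complex" where
  "TT q A B C N m = q ^ m * qp (inverse (q ^ N)) q m / qp q q m * qp A q m * qp B q m
      * pr C q m N * pr (DD q A B C N) q m N"

definition RR :: "complex \<Rightarrow> complex \<Rightarrow> complex \<Rightarrow> complex \<Rightarrow> nat \<Rightarrow> complex" where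
  "RR q A B C N = qp (C / A) q N * qp (C / B) q N * (\<Prod>i<N. - (A * B / C) * inverse (q ^ i))"

definition HH :: "complex \<Rightarrow> complex \<Rightarrow> complex \<Rightarrow> complex \<Rightarrow> nat \<Rightarrow> nat \<Rightarrow> complex" where
  "HH q A B C N m = (if m = 0 then 0 else
     TT q A B C N (m - 1) * inverse (q ^ (m - 1)) * (1 - A * q ^ (m - 1)) * (1 - B * q ^ (m - 1)))"

locale saal =
  fixes q A B C :: complex
  assumes q0: "q \<noteq> 0" and qq: "\<And>n. 1 - q ^ Suc n \<noteq> 0"
    and A0: "A \<noteq> 0" and B0: "B \<noteq> 0" and C0: "C \<noteq> 0"
begin

lemma qpq_nz: "qp q q m \<noteq> 0"
  using qq[unfolded power_Suc] by (simp add: qp_def)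

definition rho where "rho N = (1 - C * q ^ N / A) * (1 - C * q ^ N / B) * (- (A * B / C) * inverse (q ^ N))"

lemma RR_Suc: "RR q A B C (Suc N) = rho N * RR q A B C N"
  unfolding RR_def rho_def qp_Suc by (simp add: field_simps)

lemma TT_over: "TT q A B C N (Suc N) = 0"
  unfolding TT_def qp_Suc by (simp add: q0)

lemma step0: "TT q A B C (Suc N) 0 - rho N * TT q A B C N 0 = HH q A B C N 1 - HH q A B C N 0"
proof -
  define D where "D = DD q A B C N"
  have D1: "DD q A B C (Suc N) = D / q" unfolding DD_def D_def using q0 by (simp add: field_simps)
  have p1: "pr (DD q A B C (Suc N)) q 0 (Suc N) = (1 - D / q) * pr D q 0 N"
    unfolding D1 by (subst pr_lo) (simp_all add: pr_shift q0)
  have p2: "pr C q 0 (Suc N) = pr C q 0 N * (1 - C * q ^ N)" by (simp add: pr_hi)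
  have key: "(1 - C * q ^ N) * (1 - D / q) - rho N = (1 - A) * (1 - B)"
    unfolding rho_def DD_def D_def using q0 A0 B0 C0 by (simp add: field_simps)
  have e1: "TT q A B C (Suc N) 0 = pr C q 0 N * pr D q 0 N * ((1 - C * q ^ N) * (1 - D / q))"
    unfolding TT_def p1 p2 by simp
  have e2: "TT q A B C N 0 = pr C q 0 N * pr D q 0 N"
    unfolding TT_def D_def by simp
  have e3: "HH q A B C N 1 - HH q A B C N 0 = pr C q 0 N * pr D q 0 N * ((1 - A) * (1 - B))"
    by (simp add: HH_def e2)
  have "TT q A B C (Suc N) 0 - rho N * TT q A B C N 0
      = pr C q 0 N * pr D q 0 N * ((1 - C * q ^ N) * (1 - D / q) - rho N)"
    unfolding e1 e2 by (simp add: algebra_simps)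
  also have "\<dots> = HH q A B C N 1 - HH q A B C N 0" unfolding key e3 ..
  finally show ?thesis .
qed

lemma stepS:
  assumes kN: "k < N"
  shows "TT q A B C (Suc N) (Suc k) - rho N * TT q A B C N (Suc k)
     = HH q A B C N (Suc (Suc k)) - HH q A B C N (Suc k)"
proof -
  define D where "D = DD q A B C N"
  define P where "P = q ^ N"
  define Y where "Y = q ^ k"
  define X where "X = inverse P"
  define Z where "Z = qp X q k * qp A q k * qp B q k * pr C q (Suc k) N * pr D q (Suc k) N / qp q q k"
  have P0: "P \<noteq> 0" and Y0: "Y \<noteq> 0" using q0 by (auto simp: P_def Y_def)
  have qY: "1 - q * Y \<noteq> 0" using qq[of k] by (simp add: Y_def)
  have Qk: "qp q q k \<noteq> 0" by (rule qpq_nz)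
  have D1: "DD q A B C (Suc N) = D / q" unfolding DD_def D_def using q0 by (simp add: field_simps)
  have pD: "pr (DD q A B C (Suc N)) q (Suc k) (Suc N) = (1 - D * Y) * pr D q (Suc k) N"
    unfolding D1 using kN by (simp add: pr_shift q0 pr_lo Y_def)
  have pC: "pr C q (Suc k) (Suc N) = pr C q (Suc k) N * (1 - C * P)" using kN by (simp add: pr_hi P_def)
  have qX: "qp (inverse (q ^ Suc N)) q (Suc k) = (1 - X / q) * qp X q k"
    unfolding qp_Suc_shift X_def P_def using q0 by (simp add: field_simps)
  define Z' where "Z' = Z * (1-A*Y)*(1-B*Y)/(1-q*Y)"
  have e1: "TT q A B C (Suc N) (Suc k) = Z' * (q*Y*(1 - X/q)*(1-C*P)*(1-D*Y))"
    unfolding TT_def pD pC qX using Qk qY q0 unfolding Z'_def Z_def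
    by (simp add: qp_Suc Y_def field_simps)
  have e2: "TT q A B C N (Suc k) = Z' * (q*Y*(1 - X*Y))"
    unfolding TT_def using Qk qY q0 unfolding Z'_def Z_def
    by (simp add: qp_Suc Y_def X_def P_def D_def field_simps)
  have e3: "TT q A B C N k = Z * (Y*(1-C*Y)*(1-D*Y))"
    unfolding TT_def using Qk qY kN q0 unfolding Z_def
    by (simp add: pr_lo Y_def X_def P_def D_def field_simps)
  have h2: "HH q A B C N (Suc (Suc k)) = Z' * ((1 - X*Y) * (1 - A * q * Y) * (1 - B * q * Y))"
    using q0 Y0 by (simp add: HH_def e2 Y_def[symmetric] field_simps)
  have h1: "HH q A B C N (Suc k) = Z' * ((1-C*Y)*(1-D*Y)*(1-q*Y))"
    using Y0 qY by (simp add: HH_def e3 Y_def[symmetric] Z'_def field_simps)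
  have rh: "rho N = (1 - C * P / A) * (1 - C * P / B) * (- (A * B / C) * X)"
    by (simp add: rho_def P_def X_def)
  have key: "q*Y*(1 - X/q)*(1-C*P)*(1-D*Y) - rho N * (q*Y*(1 - X*Y))
     = (1 - X*Y) * (1 - A * q * Y) * (1 - B * q * Y) - (1-C*Y)*(1-D*Y)*(1-q*Y)"
    unfolding rh D_def DD_def X_def P_def[symmetric] using q0 A0 B0 C0 P0
    by (simp add: field_simps)
  have "TT q A B C (Suc N) (Suc k) - rho N * TT q A B C N (Suc k)
     = Z' * (q*Y*(1 - X/q)*(1-C*P)*(1-D*Y) - rho N * (q*Y*(1 - X*Y)))"
    unfolding e1 e2 by (simp add: algebra_simps)
  also have "\<dots> = HH q A B C N (Suc (Suc k)) - HH q A B C N (Suc k)"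
    unfolding key h1 h2 by (simp add: algebra_simps)
  finally show ?thesis .
qed

lemma stepN: "TT q A B C (Suc N) (Suc N) - rho N * TT q A B C N (Suc N)
     = HH q A B C N (Suc (Suc N)) - HH q A B C N (Suc N)"
proof -
  define P where "P = q ^ N"
  define X where "X = inverse P"
  have P0: "P \<noteq> 0" using q0 by (simp add: P_def)
  have qP: "1 - q * P \<noteq> 0" using qq[of N] by (simp add: P_def)
  have QN: "qp q q N \<noteq> 0" by (rule qpq_nz)
  have qX: "qp (inverse (q ^ Suc N)) q (Suc N) = (1 - X / q) * qp X q N"
    unfolding qp_Suc_shift X_def P_def using q0 by (simp add: field_simps)
  have "TT q A B C (Suc N) (Suc N) = - (TT q A B C N N * inverse P * (1 - A * P) * (1 - B * P))"
    unfolding TT_def qX using q0 QN qP P0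
    by (simp add: qp_Suc X_def P_def field_simps)
  then show ?thesis by (simp add: TT_over HH_def P_def)
qed

lemma saal_sum: "(\<Sum>m<Suc N. TT q A B C N m) = RR q A B C N"
proof (induction N)
  case 0
  then show ?case by (simp add: TT_def RR_def)
next
  case (Suc N)
  have tele: "(\<Sum>m<Suc (Suc N). TT q A B C (Suc N) m - rho N * TT q A B C N m) = 0"
  proof -
    have "(\<Sum>m<Suc (Suc N). TT q A B C (Suc N) m - rho N * TT q A B C N m)
        = (\<Sum>m<Suc (Suc N). HH q A B C N (Suc m) - HH q A B C N m)"
    proof (rule sum.cong)
      fix m assume "m \<in> {..<Suc (Suc N)}"
      then have "m \<le> Suc N" by simp
      then show "TT q A B C (Suc N) m - rho N * TT q A B C N m = HH q A B C N (Suc m) - HH q A B C N m"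
      proof (cases m)
        case 0 then show ?thesis using step0 by simp
      next
        case (Suc k)
        show ?thesis
        proof (cases "k < N")
          case True then show ?thesis using stepS[of k N] Suc by simp
        next
          case False
          then have "k = N" using \<open>m \<le> Suc N\<close> Suc by simp
          then show ?thesis using stepN Suc by simp
        qed
      qed
    qed simp
    also have "\<dots> = HH q A B C N (Suc (Suc N)) - HH q A B C N 0"
      by (rule sum_lessThan_telescope)
    also have "\<dots> = 0" by (simp add: HH_def TT_over)
    finally show ?thesis .
  qed
  have "(\<Sum>m<Suc (Suc N). TT q A B C (Suc N) m) = rho N * (\<Sum>m<Suc (Suc N). TT q A B C N m)"
    using tele unfolding sum_subtractf sum_distrib_left by simp
  also have "\<dots> = rho N * RR q A B C N" using Suc by (simp add: TT_over)
  finally show ?case by (simp add: RR_Suc)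
qed

end

lemma qp_add: "qp a q (n + m) = qp a q n * qp (a * q ^ n) q m"
  by (induction m) (simp_all add: qp_Suc power_add mult.assoc mult.left_commute)

lemma qp_pr: "m \<le> N \<Longrightarrow> qp (c * q ^ m) q (N - m) = pr c q m N"
  unfolding qp_def pr_def
  using prod.shift_bounds_nat_ivl[of "\<lambda>i. 1 - c * q ^ i" 0 m "N - m"]
  by (simp add: atLeast0LessThan power_add mult.assoc mult.commute mult.left_commute)

lemma qp_zero: "i < n \<Longrightarrow> x * q ^ i = 1 \<Longrightarrow> qp x q n = 0"
  unfolding qp_def by (rule prod_zero) auto

lemma qpoch_nat: "qpoch a q (int n) = qp a q n"
  by (simp add: qpoch_def qp_def)

lemma qpoch_neg: "qpoch a q (- int n) = 1 / qp (a / q) (1 / q) n"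
  unfolding qpoch_def by (cases "n = 0") (simp_all add: qp_def)

lemma qpq_split: "m \<le> N \<Longrightarrow> qp q q m * pr q q m N = qp q q N"
  using qp_add[of q q m "N - m"] qp_pr[of m N q q] by simp

definition tri :: "nat \<Rightarrow> nat" where "tri n = (\<Sum>i<n. i)"

lemma tri_0[simp]: "tri 0 = 0" by (simp add: tri_def)
lemma tri_Suc: "tri (Suc n) = tri n + n" by (simp add: tri_def)
lemma tri_add: "tri (j + d) = tri j + tri d + j * d"
  by (induction d) (simp_all add: tri_Suc)
lemma tri_2: "2 * tri n = n * (n - 1)"
  by (induction n) (simp_all add: tri_Suc, auto simp: algebra_simps split: nat_diff_split)

lemma prod_pow: "(\<Prod>i<n. (q::complex) ^ i) = q ^ tri n"
  by (simp add: tri_def power_sum)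

lemma pw_nat: "(q::complex) ^ n = q powi int n" by simp
lemma pw_inv: "inverse ((q::complex) ^ n) = q powi (- int n)"
  by (simp add: power_int_minus)
lemma pw_mult: "(q::complex) \<noteq> 0 \<Longrightarrow> q powi m * q powi n = q powi (m + n)"
  by (simp add: power_int_add)

lemma refl_lem:
  assumes "q \<noteq> 0" "d \<le> n"
  shows "qp (inverse (q ^ n)) q d * qp q q (n - d) = (-1) ^ d * q powi (int (tri d) - int n * int d) * qp q q n"
  using assms(2)
proof (induction d)
  case 0 then show ?case by (simp add: tri_def)
next
  case (Suc d)
  have nd: "n - d = Suc (n - Suc d)" using Suc.prems by simp
  have IH: "qp (inverse (q ^ n)) q d * qp q q (n - Suc d) * (1 - q ^ (n - d))
      = (-1) ^ d * q powi (int (tri d) - int n * int d) * qp q q n"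
  proof -
    have q1: "qp q q (n - d) = qp q q (n - Suc d) * (1 - q ^ (n - d))"
      by (simp only: nd qp_Suc power_Suc)
    have "qp (inverse (q ^ n)) q d * qp q q (n - d) = (-1) ^ d * q powi (int (tri d) - int n * int d) * qp q q n"
      using Suc.IH Suc.prems by simp
    then show ?thesis unfolding q1 by (simp only: mult.assoc)
  qed
  have f: "1 - inverse (q ^ n) * q ^ d = - (q powi (int d - int n)) * (1 - q ^ (n - d))"
  proof -
    have e1: "q ^ n = q ^ (n - d) * q ^ d" using Suc.prems by (simp flip: power_add)
    have e2: "int d - int n = - int (n - d)" using Suc.prems by simp
    have e3: "q powi (int d - int n) = inverse (q ^ (n - d))" unfolding e2 pw_inv ..
    show ?thesis unfolding e3 e1 using assms(1) by (simp add: field_simps)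
  qed
  have "qp (inverse (q ^ n)) q (Suc d) * qp q q (n - Suc d)
      = - (q powi (int d - int n)) * (qp (inverse (q ^ n)) q d * qp q q (n - Suc d) * (1 - q ^ (n - d)))"
    by (simp add: qp_Suc f)
  also have "\<dots> = (-1) ^ Suc d * (q powi (int d - int n) * q powi (int (tri d) - int n * int d)) * qp q q n"
    unfolding IH by simp
  also have "q powi (int d - int n) * q powi (int (tri d) - int n * int d) = q powi (int (tri (Suc d)) - int n * int (Suc d))"
    using assms(1) by (simp add: pw_mult tri_Suc algebra_simps)
  finally show ?case .
qed

lemma qpinv_lem:
  assumes "q \<noteq> 0"
  shows "qp (1 / q) (1 / q) d = (-1) ^ d * q powi (- int (tri d) - int d) * qp q q d"
proof (induction d)
  case 0 then show ?case by (simp add: tri_def)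
next
  case (Suc d)
  have f: "1 - 1 / q * (1 / q) ^ d = - (q powi (- int d - 1)) * (1 - q * q ^ d)"
    using assms by (simp add: field_simps power_int_diff power_int_minus)
  have p: "q powi (- int d - 1) * q powi (- int (tri d) - int d) = q powi (- int (tri (Suc d)) - int (Suc d))"
    using assms by (simp add: pw_mult tri_Suc algebra_simps)
  have "qp (1 / q) (1 / q) (Suc d) = ((-1) ^ d * q powi (- int (tri d) - int d) * qp q q d) * (- (q powi (- int d - 1)) * (1 - q * q ^ d))"
    unfolding qp_Suc Suc f ..
  also have "\<dots> = (-1) ^ Suc d * (q powi (- int d - 1) * q powi (- int (tri d) - int d)) * (qp q q d * (1 - q * q ^ d))"
    by (simp add: algebra_simps)
  also have "\<dots> = (-1) ^ Suc d * q powi (- int (tri (Suc d)) - int (Suc d)) * qp q q (Suc d)"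
    unfolding p qp_Suc ..
  finally show ?case .
qed

lemma prod_split: "(\<Prod>i<n+(m::nat). f i) = (\<Prod>i<n. f i) * (\<Prod>i<m. (f (n + i) :: complex))"
  by (induction m) (simp_all add: mult.assoc)

lemma pow_split: "(\<Prod>i<k. (q::complex) ^ (j + i)) = q ^ (j * k + tri k)"
  by (simp add: power_add prod.distrib prod_pow power_mult[symmetric] mult.commute)

lemma bl_P1:
  assumes b0: "b \<noteq> 0" and q0: "(q::complex) \<noteq> 0"
  shows "qp (1/b) q N * (\<Prod>i<N. -(inverse (q^j) * b) * inverse (q^i))
     = (\<Prod>i<N. q^i - b) * q powi (- int j * int N - int (tri N))"
proof -
  have "qp (1/b) q N * (\<Prod>i<N. -(inverse (q^j) * b) * inverse (q^i))
      = (\<Prod>i<N. (q^i - b) * (inverse (q^j) * inverse (q^i)))"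
    unfolding qp_def prod.distrib[symmetric] using b0 q0 by (intro prod.cong) (simp_all add: field_simps)
  also have "\<dots> = (\<Prod>i<N. q^i - b) * (inverse (q^j) ^ N * inverse (q ^ tri N))"
    using prod_inversef[of "\<lambda>i. q ^ i" "{..<N}", unfolded comp_def]
    by (simp add: prod.distrib prod_pow power_inverse)
  also have "inverse (q^j) ^ N * inverse (q ^ tri N) = inverse (q ^ (j * N + tri N))"
    by (simp add: power_add power_mult power_inverse)
  also have "\<dots> = q powi (- int j * int N - int (tri N))"
    unfolding pw_inv by simp
  finally show ?thesis .
qed

lemma pw_nat_mult: "(q::complex) \<noteq> 0 \<Longrightarrow> q ^ n * q powi m = q powi (int n + m)"
  by (simp add: power_int_add)

lemma canc1: "(X::complex) \<noteq> 0 \<Longrightarrow> a * (c * X) * d / X = a * (c * d)"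
  by (simp add: field_simps)
lemma canc2: "(a::complex) * d / (1 / X) = a * (c * X) * e \<longleftrightarrow> a * X * d = a * X * (c * e)"
  by (simp add: algebra_simps)

lemma fac_split: "(q::complex) \<noteq> 0 \<Longrightarrow> (\<Prod>i<k. q^(j+i) - b) = q ^ (j * k + tri k) * (\<Prod>i<k. 1 - b * inverse (q^(j+i)))"
proof -
  assume q0: "q \<noteq> 0"
  have "(\<Prod>i<k. q^(j+i) - b) = (\<Prod>i<k. q^(j+i) * (1 - b * inverse (q^(j+i))))"
    using q0 by (intro prod.cong) (simp_all add: field_simps)
  also have "\<dots> = q ^ (j * k + tri k) * (\<Prod>i<k. 1 - b * inverse (q^(j+i)))"
    by (simp only: prod.distrib pow_split)
  finally show ?thesis .
qed

lemma bl:
  assumes q0: "(q::complex) \<noteq> 0" and b0: "b \<noteq> 0"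
    and nz: "qpoch (b * q powi (1 - int N)) q (int N - int j) \<noteq> 0"
  shows "qp (1/b) q N * (\<Prod>i<N. -(inverse (q^j) * b) * inverse (q^i)) / qpoch (b * q powi (1 - int N)) q (int N - int j)
     = (\<Prod>i<j. q^i - b) * q powi (- int (tri j) - int j * int N)"
proof (cases "j \<le> N")
  case True
  then obtain k where N: "N = j + k" by (metis le_add_diff_inverse)
  define X where "X = (\<Prod>i<k. 1 - b * inverse (q^(j+i)))"
  have qpk: "qpoch (b * q powi (1 - int N)) q (int N - int j) = X"
  proof -
    have "qpoch (b * q powi (1 - int N)) q (int N - int j) = qp (b * q powi (1 - int N)) q k"
      using qpoch_nat[of _ _ k] N by simp
    also have "\<dots> = (\<Prod>i<k. 1 - b * inverse (q^(j + (k - Suc i))))"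
      unfolding qp_def
    proof (rule prod.cong)
      fix i assume "i \<in> {..<k}"
      then have ik: "i < k" by simp
      have "q powi (1 - int N) * q ^ i = q powi (1 - int N + int i)"
        using q0 by (simp add: power_int_add)
      also have "1 - int N + int i = - int (j + (k - Suc i))" using ik N by simp
      finally have "q powi (1 - int N) * q ^ i = inverse (q^(j + (k - Suc i)))" by (simp add: pw_inv)
      then show "1 - b * q powi (1 - int N) * q ^ i = 1 - b * inverse (q^(j + (k - Suc i)))"
        by (simp add: mult.assoc)
    qed simp
    also have "\<dots> = X" unfolding X_def by (rule prod.nat_diff_reindex)
    finally show ?thesis .
  qed
  have X0: "X \<noteq> 0" using nz qpk by simp
  have sp: "(\<Prod>i<N. q^i - b) = (\<Prod>i<j. q^i - b) * (q ^ (j * k + tri k) * X)"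
    unfolding N prod_split fac_split[OF q0] X_def ..
  have pw: "q ^ (j * k + tri k) * q powi (- int j * int N - int (tri N)) = q powi (- int (tri j) - int j * int N)"
  proof -
    have "int (j * k + tri k) + (- int j * int N - int (tri N)) = - int (tri j) - int j * int N"
      by (simp add: N tri_add algebra_simps)
    then show ?thesis unfolding pw_nat_mult[OF q0] by (rule arg_cong)
  qed
  show ?thesis
    unfolding bl_P1[OF b0 q0] qpk sp canc1[OF X0] pw ..
next
  case False
  then obtain k where j: "j = N + k" by (metis le_add_diff_inverse nat_le_linear)
  define X where "X = (\<Prod>i<k. 1 - b * inverse (q^(N+i)))"
  have qpk: "qpoch (b * q powi (1 - int N)) q (int N - int j) = 1 / X"
  proof -
    have "qpoch (b * q powi (1 - int N)) q (int N - int j) = 1 / qp (b * q powi (1 - int N) / q) (1 / q) k"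
      using qpoch_neg[of _ _ k] j by simp
    also have "qp (b * q powi (1 - int N) / q) (1 / q) k = X"
      unfolding qp_def X_def
    proof (rule prod.cong)
      fix i
      have h: "q powi (1 - int N) = q / q ^ N" using q0 by (simp add: power_int_diff)
      show "1 - b * q powi (1 - int N) / q * (1 / q) ^ i = 1 - b * inverse (q ^ (N + i))"
        unfolding h using q0 by (simp add: power_add field_simps)
    qed simp
    finally show ?thesis .
  qed
  have sp: "(\<Prod>i<j. q^i - b) = (\<Prod>i<N. q^i - b) * (q ^ (N * k + tri k) * X)"
    unfolding j prod_split fac_split[OF q0] X_def ..
  have pw: "q ^ (N * k + tri k) * q powi (- int (tri j) - int j * int N) = q powi (- int j * int N - int (tri N))"
  proof -
    have "int (N * k + tri k) + (- int (tri j) - int j * int N) = - int j * int N - int (tri N)"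
      by (simp add: j tri_add algebra_simps)
    then show ?thesis unfolding pw_nat_mult[OF q0] by (rule arg_cong)
  qed
  show ?thesis
    unfolding bl_P1[OF b0 q0] qpk sp canc2 pw ..
qed

lemma sum_split: "(\<Sum>i<n+(m::nat). f i) = (\<Sum>i<n. f i) + (\<Sum>i<m. (f (n + i) :: complex))"
  by (induction m) simp_all

lemma qpq_nz': assumes "\<And>n. 1 - Q ^ Suc n \<noteq> 0" shows "qp Q Q m \<noteq> 0"
  using assms[unfolded power_Suc] by (simp add: qp_def)

lemma pw_comb: "(Q::complex) \<noteq> 0 \<Longrightarrow> Q powi e * Q ^ n = Q powi (e + int n)"
  by (simp add: power_int_add)

lemma phibar_dec:
  fixes Q a b :: complex and N d j2 :: nat
  assumes Q0: "Q \<noteq> 0" and a0: "a \<noteq> 0" and qq: "\<And>n. 1 - Q ^ Suc n \<noteq> 0"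
  shows "phibar (N + d) [Q powi (- int (j2 + d)), a * b, Q]
           [a, Q powi (1 + int j2 - int (j2 + d)), b * Q powi (1 - int (N + d) - int j2)] Q Q
   = Q ^ d * qp (inverse (Q ^ (N + d))) Q d * qp (inverse (Q ^ (j2 + d))) Q d * qp (a * b) Q d * qp Q Q N
     * (\<Sum>m<Suc N. TT Q (inverse (Q ^ j2)) (a * b * Q ^ d) (a * Q ^ d) N m)"
proof -
  define A where "A = inverse (Q ^ j2)"
  define B where "B = a * b * Q ^ d"
  define C where "C = a * Q ^ d"
  define K0 where "K0 = Q ^ d * qp (inverse (Q ^ (N + d))) Q d * qp (inverse (Q ^ (j2 + d))) Q d * qp (a * b) Q d * qp Q Q N"
  define f where "f k = Q ^ k * qpoch (Q powi (- int (N + d))) Q (int k) / qpoch Q Q (int k) *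
     (qpoch (Q powi (- int (j2 + d))) Q (int k) * qpoch (a * Q ^ k) Q (int (N + d) - int k) *
     (qpoch (a * b) Q (int k) * qpoch (Q powi (1 + int j2 - int (j2 + d)) * Q ^ k) Q (int (N + d) - int k) *
     (qpoch Q Q (int k) * qpoch (b * Q powi (1 - int (N + d) - int j2) * Q ^ k) Q (int (N + d) - int k))))" for k
  have ph: "phibar (N + d) [Q powi (- int (j2 + d)), a * b, Q]
           [a, Q powi (1 + int j2 - int (j2 + d)), b * Q powi (1 - int (N + d) - int j2)] Q Q
      = (\<Sum>k=0..N + d. f k)"
    unfolding phibar_def f_def by simp
  have sp: "(\<Sum>k=0..N + d. f k) = (\<Sum>k<d. f k) + (\<Sum>m<Suc N. f (d + m))"
  proof -
    have "{0..N + d} = {..<d + Suc N}" by auto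
    then show ?thesis by (simp only: sum_split)
  qed
  have z: "f k = 0" if "k < d" for k
  proof -
    have e: "int (N + d) - int k = int (N + d - k)" using that by simp
    have "qp (Q powi (1 + int j2 - int (j2 + d)) * Q ^ k) Q (N + d - k) = 0"
    proof (rule qp_zero[of "d - 1 - k"])
      show "d - 1 - k < N + d - k" using that by simp
      have "Q powi (1 + int j2 - int (j2 + d)) * Q ^ k * Q ^ (d - 1 - k)
          = Q powi (1 + int j2 - int (j2 + d) + int k + int (d - 1 - k))"
        by (simp only: pw_comb[OF Q0])
      also have "1 + int j2 - int (j2 + d) + int k + int (d - 1 - k) = 0" using that by simp
      finally show "Q powi (1 + int j2 - int (j2 + d)) * Q ^ k * Q ^ (d - 1 - k) = 1" by simp
    qed
    then show ?thesis unfolding f_def e qpoch_nat by simp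
  qed
  have t: "f (d + m) = K0 * TT Q A B C N m" if "m \<le> N" for m
  proof -
    have e: "int (N + d) - int (d + m) = int (N - m)" using that by simp
    have x1: "Q powi (- int (N + d)) = inverse (Q ^ (N + d))" by (simp add: pw_inv)
    have x2: "Q powi (- int (j2 + d)) = inverse (Q ^ (j2 + d))" by (simp add: pw_inv)
    have y1: "inverse (Q ^ (N + d)) * Q ^ d = inverse (Q ^ N)" using Q0 by (simp add: power_add field_simps)
    have y2: "inverse (Q ^ (j2 + d)) * Q ^ d = A" using Q0 by (simp add: A_def power_add field_simps)
    have y3: "a * b * Q ^ d = B" by (simp add: B_def)
    have w1: "a * Q ^ (d + m) = C * Q ^ m" by (simp add: C_def power_add)
    have w2: "Q powi (1 + int j2 - int (j2 + d)) * Q ^ (d + m) = Q * Q ^ m"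
    proof -
      have "Q powi (1 + int j2 - int (j2 + d)) * Q ^ (d + m) = Q powi (1 + int j2 - int (j2 + d) + int (d + m))"
        by (rule pw_comb[OF Q0])
      also have "1 + int j2 - int (j2 + d) + int (d + m) = int (Suc m)" by simp
      finally show ?thesis using Q0 by (simp add: power_int_add)
    qed
    have w3: "b * Q powi (1 - int (N + d) - int j2) * Q ^ (d + m) = DD Q A B C N * Q ^ m"
    proof -
      have "Q powi (1 - int (N + d) - int j2) * Q ^ (d + m) = Q powi (1 - int (N + d) - int j2 + int (d + m))"
        by (rule pw_comb[OF Q0])
      also have "1 - int (N + d) - int j2 + int (d + m) = 1 - int N - int j2 + int m" by simp
      also have "Q powi (1 - int N - int j2 + int m) = Q * inverse (Q ^ N) * inverse (Q ^ j2) * Q ^ m"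
        using Q0 by (simp add: power_int_add power_int_diff field_simps)
      finally have "Q powi (1 - int (N + d) - int j2) * Q ^ (d + m) = Q * inverse (Q ^ N) * inverse (Q ^ j2) * Q ^ m" .
      moreover have "DD Q A B C N = b * Q * inverse (Q ^ N) * inverse (Q ^ j2)"
        unfolding DD_def A_def B_def C_def using Q0 a0 by (simp add: field_simps)
      ultimately show ?thesis by (simp add: mult.assoc mult.left_commute mult.commute)
    qed
    have p1: "qp (C * Q ^ m) Q (N - m) = pr C Q m N" using that by (rule qp_pr)
    have p2: "qp (Q * Q ^ m) Q (N - m) = qp Q Q N / qp Q Q m"
      using qp_pr[OF that, of Q Q] qpq_split[OF that, of Q] qpq_nz'[OF qq, of m]
      by (simp add: field_simps)
    have p3: "qp (DD Q A B C N * Q ^ m) Q (N - m) = pr (DD Q A B C N) Q m N" using that by (rule qp_pr)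
    have n1: "qp Q Q (d + m) \<noteq> 0" "qp Q Q m \<noteq> 0" using qpq_nz'[OF qq] by auto
    have "f (d + m) = Q ^ (d + m) * (qp (inverse (Q ^ (N + d))) Q d * qp (inverse (Q ^ N)) Q m) / qp Q Q (d + m) *
       ((qp (inverse (Q ^ (j2 + d))) Q d * qp A Q m) * pr C Q m N *
       ((qp (a * b) Q d * qp B Q m) * (qp Q Q N / qp Q Q m) *
       (qp Q Q (d + m) * pr (DD Q A B C N) Q m N)))"
      unfolding f_def e qpoch_nat x1 x2 w1 w2 w3 p1 p2 p3 qp_add y1 y2 y3 ..
    also have "\<dots> = K0 * TT Q A B C N m"
      unfolding K0_def TT_def using n1 by (simp add: power_add field_simps)
    finally show ?thesis .
  qed
  have s1: "(\<Sum>k<d. f k) = 0" using z by simp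
  have s2: "(\<Sum>m<Suc N. f (d + m)) = K0 * (\<Sum>m<Suc N. TT Q A B C N m)"
    unfolding sum_distrib_left by (rule sum.cong) (auto simp: t)
  show ?thesis
    unfolding ph sp s1 s2 by (simp add: K0_def A_def B_def C_def)
qed

lemma tri_2int: "2 * int (tri n) = int n * int n - int n"
  by (induction n) (simp_all add: tri_Suc algebra_simps)

lemma powr_tri:
  assumes "0 < q"
  shows "complex_of_real (q powr (real j1 * (real j1 + 2 * real N - 1) / 2)) = complex_of_real q ^ (tri j1 + j1 * N)"
proof -
  have "real_of_int (2 * int (tri j1)) = real_of_int (int j1 * int j1 - int j1)" by (simp only: tri_2int)
  then have t: "2 * real (tri j1) = real j1 * real j1 - real j1" by simp
  have "real j1 * (real j1 + 2 * real N - 1) / 2 = real (tri j1 + j1 * N)"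
    using t by (simp add: algebra_simps)
  then have "q powr (real j1 * (real j1 + 2 * real N - 1) / 2) = q ^ (tri j1 + j1 * N)"
    using assms by (simp only: powr_realpow)
  then show ?thesis by simp
qed

lemma pwc: "(Q::complex) \<noteq> 0 \<Longrightarrow> Q ^ n1 * Q ^ d * Q powi e1 * Q powi e2 * Q powi eb = Q powi (int n1 + int d + e1 + e2 + eb)"
  by (simp add: power_int_add)

lemma expo:
  fixes Q :: complex and N d j2 :: nat
  assumes Q0: "Q \<noteq> 0"
  shows "Q ^ (tri (j2 + d) + (j2 + d) * N) * Q ^ d * Q powi (int (tri d) - int (N + d) * int d)
     * Q powi (int (tri d) - int (j2 + d) * int d) * Q powi (- int (tri j2) - int j2 * int N)
     = Q powi (- int (tri d) - int d)"
proof -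
  have t2: "2 * int (tri d) = int d * int d - int d" by (rule tri_2int)
  have "int (tri (j2 + d) + (j2 + d) * N) + int d + (int (tri d) - int (N + d) * int d)
     + (int (tri d) - int (j2 + d) * int d) + (- int (tri j2) - int j2 * int N) = - int (tri d) - int d"
    using t2 unfolding tri_add by (simp add: algebra_simps)
  then show ?thesis unfolding pwc[OF Q0] by (rule arg_cong)
qed

lemma final_alg:
  fixes u1 u2 R3 G S QE Qd W1 W2 Wb FN FNd Fj1 Fj2 Fd qa qaN qab P1 Y sg sgj aj :: complex
  assumes nz: "FN \<noteq> 0" "Fj2 \<noteq> 0" "FNd \<noteq> 0" "Fd \<noteq> 0" "Fj1 \<noteq> 0" "qa \<noteq> 0" "qaN \<noteq> 0" "Y \<noteq> 0"
     "QE \<noteq> 0" "Qd \<noteq> 0" "W1 \<noteq> 0" "W2 \<noteq> 0" "Wb \<noteq> 0" "sg \<noteq> 0"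
    and u1: "u1 * FN = sg * W1 * FNd" and u2: "u2 * Fj2 = sg * W2 * Fj1"
    and r3: "R3 = sg * (QE * Qd * W1 * W2 * Wb) * Fd" and g: "G = P1 * Wb * Y" and s: "S = sgj * aj"
  shows "S * QE * (1 / R3) / (FNd * (qa * qaN) * Y) * (Qd * u1 * u2 * qab * FN * (qaN * G))
       = aj * (sgj * sg) * P1 * qab / qa * (Fj1 / (Fj2 * Fd))"
proof -
  have u1': "u1 = sg * W1 * FNd / FN" using u1 nz by (simp add: field_simps)
  have u2': "u2 = sg * W2 * Fj1 / Fj2" using u2 nz by (simp add: field_simps)
  show ?thesis unfolding u1' u2' r3 g s using nz by (simp add: field_simps)
qed

lemma main_case:
  fixes q :: real and s1 s2 :: complex and N d j2 :: nat
  assumes q0: "0 < q" and q1: "q < 1" and s10: "s1 \<noteq> 0" and s20: "s2 \<noteq> 0"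
    and h6: "qpoch (inverse (s1 ^ 2) * complex_of_real q powi (1 - int N)) (complex_of_real q) (int N - int j2) \<noteq> 0"
    and h5: "qpoch ((s2 / s1) * s1 * s2) (complex_of_real q) (int (N + d + j2)) \<noteq> 0"
  shows "Rw q (s2 / s1) s1 s2 (N + d) N (j2 + d) j2 = qbb q (s2 ^ 2 / s1 ^ 2) (s2 ^ 2) j2 (j2 + d)"
proof -
  define Q where "Q = complex_of_real q"
  define a where "a = s2 ^ 2"
  define b where "b = inverse (s1 ^ 2)"
  have Q0: "Q \<noteq> 0" using q0 by (simp add: Q_def)
  have qq: "1 - Q ^ Suc n \<noteq> 0" for n
  proof -
    have "q ^ Suc n < 1" using q0 q1 by (rule power_Suc_less_one)
    then have "q ^ Suc n \<noteq> 1" by simp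
    then show ?thesis unfolding Q_def by (metis of_real_1 of_real_eq_iff of_real_power right_minus_eq)
  qed
  have a0: "a \<noteq> 0" using s20 by (simp add: a_def)
  have b0: "b \<noteq> 0" using s10 by (simp add: b_def)
  define A where "A = inverse (Q ^ j2)"
  define B where "B = a * b * Q ^ d"
  define C where "C = a * Q ^ d"
  have A0: "A \<noteq> 0" and B0: "B \<noteq> 0" and C0: "C \<noteq> 0" using Q0 a0 b0 by (auto simp: A_def B_def C_def)
  have SA: "saal Q A B C" using Q0 qq A0 B0 C0 by (simp add: saal_def)
  define Y where "Y = qpoch (b * Q powi (1 - int N)) Q (int N - int j2)"
  have Y0: "Y \<noteq> 0" using h6 by (simp add: Y_def b_def Q_def)
  define PH where "PH = phibar (N + d) [Q powi (- int (j2 + d)), a * b, Q]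
           [a, Q powi (1 + int j2 - int (j2 + d)), b * Q powi (1 - int (N + d) - int j2)] Q Q"
  define R3 where "R3 = qp (1 / Q) (1 / Q) d"
  define S where "S = (- s2) ^ (j2 + d) * s2 powi (int j2 - int d)"
  have z1: "s2 / s1 * s1 / s2 = 1" using s10 s20 by simp
  have z2: "s2 / s1 * s1 * s2 = a" using s10 by (simp add: a_def power2_eq_square)
  have z3: "s2 / s1 * inverse s1 * s2 = a * b" using s10 by (simp add: a_def b_def power2_eq_square field_simps)
  have z4: "Q * inverse (s2 / s1) * inverse s1 * s2 = Q" using s10 s20 by (simp add: field_simps)
  have z5: "- s1 * (s2 / s1) = - s2" using s10 by simp
  have R: "Rw q (s2 / s1) s1 s2 (N + d) N (j2 + d) j2
     = S * Q ^ (tri (j2 + d) + (j2 + d) * N) * (1 / R3)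
       / (qp Q Q (N + d) * qp a Q (N + d + j2) * Y) * PH"
  proof -
    have e1: "int N + int j2 - int (N + d) = int j2 - int d" by simp
    have e2: "qpoch 1 Q (int j2 - int (j2 + d)) = 1 / R3"
      using qpoch_neg[of 1 Q d] by (simp add: R3_def)
    show ?thesis
      unfolding Rw_def Let_def Q_def[symmetric] z1 z2 z3 z4 z5 e1 e2 powr_tri[OF assms(1)] qpoch_nat
      by (simp add: S_def PH_def Y_def a_def b_def add.commute add.left_commute)
  qed
  define FN where "FN = qp Q Q N"
  define FNd where "FNd = qp Q Q (N + d)"
  define Fj1 where "Fj1 = qp Q Q (j2 + d)"
  define Fj2 where "Fj2 = qp Q Q j2"
  define Fd where "Fd = qp Q Q d"
  define qa where "qa = qp a Q (j2 + d)"
  define qaN where "qaN = qp (a * Q ^ (j2 + d)) Q N"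
  define qab where "qab = qp (a * b) Q d"
  define u1 where "u1 = qp (inverse (Q ^ (N + d))) Q d"
  define u2 where "u2 = qp (inverse (Q ^ (j2 + d))) Q d"
  define P1 where "P1 = (\<Prod>i<j2. Q ^ i - b)"
  define G where "G = qp (1 / b) Q N * (\<Prod>i<N. - (inverse (Q ^ j2) * b) * inverse (Q ^ i))"
  define sg :: complex where "sg = (-1) ^ d"
  define sgj :: complex where "sgj = (-1) ^ (j2 + d)"
  define aj where "aj = a ^ j2"
  define QE where "QE = Q ^ (tri (j2 + d) + (j2 + d) * N)"
  define Qd where "Qd = Q ^ d"
  define W1 where "W1 = Q powi (int (tri d) - int (N + d) * int d)"
  define W2 where "W2 = Q powi (int (tri d) - int (j2 + d) * int d)"
  define Wb where "Wb = Q powi (- int (tri j2) - int j2 * int N)"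
  have qsplit: "qp a Q (N + d + j2) = qa * qaN"
    unfolding qa_def qaN_def using qp_add[of a Q "j2 + d" N] by (simp add: add.commute add.left_commute)
  have qa0: "qa * qaN \<noteq> 0" using h5 unfolding z2 Q_def[symmetric] qpoch_nat qsplit .
  have PHd: "PH = Qd * u1 * u2 * qab * FN * (qaN * G)"
  proof -
    have "PH = Qd * u1 * u2 * qab * FN * RR Q A B C N"
      unfolding PH_def phibar_dec[OF Q0 a0 qq] saal.saal_sum[OF SA, symmetric]
      by (simp add: Qd_def u1_def u2_def qab_def FN_def A_def B_def C_def)
    also have "RR Q A B C N = qaN * G"
    proof -
      have "C / A = a * Q ^ (j2 + d)" using Q0 by (simp add: A_def C_def power_add field_simps)
      moreover have "C / B = 1 / b" using a0 b0 Q0 by (simp add: B_def C_def field_simps)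
      moreover have "A * B / C = inverse (Q ^ j2) * b" using a0 Q0 by (simp add: A_def B_def C_def field_simps)
      ultimately show ?thesis unfolding RR_def qaN_def G_def by (simp add: mult.assoc)
    qed
    finally show ?thesis .
  qed
  have u1e: "u1 * FN = sg * W1 * FNd"
    using refl_lem[OF Q0, of d "N + d"] by (simp add: u1_def FN_def sg_def W1_def FNd_def)
  have u2e: "u2 * Fj2 = sg * W2 * Fj1"
    using refl_lem[OF Q0, of d "j2 + d"] by (simp add: u2_def Fj2_def sg_def W2_def Fj1_def)
  have r3: "R3 = sg * (QE * Qd * W1 * W2 * Wb) * Fd"
    using qpinv_lem[OF Q0, of d] expo[OF Q0, of j2 d N]
    by (simp add: R3_def sg_def QE_def Qd_def W1_def W2_def Wb_def Fd_def mult.assoc)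
  have g: "G = P1 * Wb * Y"
  proof -
    have "G / Y = P1 * Wb" using bl[OF Q0 b0, of N j2] Y0
      unfolding G_def P1_def Wb_def Y_def by simp
    then show ?thesis using Y0 by (simp add: field_simps)
  qed
  have s: "S = sgj * aj"
  proof -
    have "s2 ^ (j2 + d) * s2 powi (int j2 - int d) = s2 powi (int j2 - int d + int (j2 + d))"
      by (subst mult.commute) (rule pw_comb[OF s20])
    also have "int j2 - int d + int (j2 + d) = int (2 * j2)" by simp
    also have "s2 powi (int (2 * j2)) = aj"
      unfolding power_int_of_nat by (simp add: aj_def a_def power_mult)
    finally have "s2 ^ (j2 + d) * s2 powi (int j2 - int d) = aj" .
    moreover have "(- s2) ^ (j2 + d) = (-1) ^ (j2 + d) * s2 ^ (j2 + d)" by (rule power_minus)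
    ultimately show ?thesis unfolding S_def sgj_def by (simp only: mult.assoc)
  qed
  have nz: "FN \<noteq> 0" "Fj2 \<noteq> 0" "FNd \<noteq> 0" "Fd \<noteq> 0" "Fj1 \<noteq> 0" "qa \<noteq> 0" "qaN \<noteq> 0" "Y \<noteq> 0"
     "QE \<noteq> 0" "Qd \<noteq> 0" "W1 \<noteq> 0" "W2 \<noteq> 0" "Wb \<noteq> 0" "sg \<noteq> 0"
    using qpq_nz'[OF qq] qa0 Y0 Q0
    by (auto simp: FN_def Fj2_def FNd_def Fd_def Fj1_def QE_def Qd_def W1_def W2_def Wb_def sg_def)
  have sgs: "sgj * sg = (-1) ^ j2"
    unfolding sgj_def sg_def by (simp add: power_add mult.assoc flip: power_mult_distrib)
  have L: "Rw q (s2 / s1) s1 s2 (N + d) N (j2 + d) j2 = aj * (-1) ^ j2 * P1 * qab / qa * (Fj1 / (Fj2 * Fd))"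
    unfolding R PHd qsplit QE_def[symmetric] FNd_def[symmetric] FN_def[symmetric]
    unfolding final_alg[OF nz u1e u2e r3 g s] sgs ..
  have pr1: "(\<Prod>i<j2. a * b - a * Q ^ i) = aj * (-1) ^ j2 * P1"
  proof -
    have "(\<Prod>i<j2. a * b - a * Q ^ i) = (\<Prod>i<j2. (- a) * (Q ^ i - b))"
      by (rule prod.cong) (simp_all add: algebra_simps)
    also have "\<dots> = (- a) ^ j2 * P1" unfolding prod.distrib P1_def by (simp only: prod_constant card_lessThan)
    also have "(- a) ^ j2 = (-1) ^ j2 * aj" unfolding aj_def by (rule power_minus)
    finally show ?thesis by (simp only: ac_simps)
  qed
  have Rq: "qbb q (s2 ^ 2 / s1 ^ 2) (s2 ^ 2) j2 (j2 + d) = (\<Prod>i<j2. a * b - a * Q ^ i) * qab / qa * (Fj1 / (Fj2 * Fd))"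
  proof -
    have "s2 ^ 2 / s1 ^ 2 = a * b" by (simp add: a_def b_def divide_inverse)
    then show ?thesis
      unfolding qbb_def Let_def Q_def[symmetric]
      by (simp add: qpoch_nat qpoch_nat[of _ _ "j2 + d", unfolded of_nat_add] a_def[symmetric] qab_def qa_def Fj1_def Fj2_def Fd_def)
  qed
  show ?thesis unfolding L Rq pr1 ..
qed

theorem proposition3p5:
  fixes q :: real and s1 s2 :: complex and i1 i2 j1 j2 :: nat
  assumes "0 < q" and "q < 1"
    and "s1 \<noteq> 0" and "s2 \<noteq> 0"
    and "qpoch ((s2 / s1) * s1 * s2) (complex_of_real q) (int (i1 + j2)) \<noteq> 0"
    and "qpoch (inverse (s1 ^ 2) * complex_of_real q powi (1 - int i2)) (complex_of_real q)
           (int i2 - int j2) \<noteq> 0"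
    and "qpoch (s2 ^ 2) (complex_of_real q) (int j1) \<noteq> 0"
  shows "Rw q (s2 / s1) s1 s2 i1 i2 j1 j2 =
           (if i1 + j2 = i2 + j1 then 1 else 0) * (if j2 \<le> j1 then 1 else 0)
             * qbb q (s2 ^ 2 / s1 ^ 2) (s2 ^ 2) j2 j1"
proof (cases "i1 + j2 = i2 + j1")
  case False
  then have "j1 + i2 \<noteq> i1 + j2" by simp
  then show ?thesis using False unfolding Rw_def Let_def by simp
next
  case eq: True
  show ?thesis
  proof (cases "j2 \<le> j1")
    case False
    have z1: "s2 / s1 * s1 / s2 = 1" using assms(3,4) by simp
    have e: "int j2 - int j1 = int (j2 - j1)" using False by simp
    have "qp 1 (complex_of_real q) (j2 - j1) = 0"
      by (rule qp_zero[of 0]) (use False in simp_all)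
    then have "qpoch (s2 / s1 * s1 / s2) (complex_of_real q) (int j2 - int j1) = 0"
      unfolding z1 e qpoch_nat .
    then show ?thesis using False unfolding Rw_def Let_def by simp
  next
    case True
    then obtain d where j1: "j1 = j2 + d" by (metis le_add_diff_inverse)
    with eq have i1: "i1 = i2 + d" by simp
    have h5: "qpoch ((s2 / s1) * s1 * s2) (complex_of_real q) (int (i2 + d + j2)) \<noteq> 0"
      using assms(5) i1 by simp
    have "Rw q (s2 / s1) s1 s2 (i2 + d) i2 (j2 + d) j2 = qbb q (s2 ^ 2 / s1 ^ 2) (s2 ^ 2) j2 (j2 + d)"
      by (rule main_case[OF assms(1-4) assms(6) h5])
    then show ?thesis using eq True i1 j1 by simp
  qed
qed

end
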